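(* Let $(\mathbb{P},\leq)$ be a lattice with enough prime elements, and let $p\in\mathbb{P}$. Then $\mathsf{S}_{\mathrm{fin}}(\mathbb{V}_p,\mathbb{V}_p)$ holds if and only if Player I does not have a winning strategy in the game $\mathsf{G}_{\mathrm{fin}}(\mathbb{V}_p,\mathbb{V}_p)$.
   Context: A lattice is a poset in which every two elements $a,b$ have a supremum $a\vee b$ and an infimum $a\wedge b$. For $p\in\mathbb{P}$, $\mathbb{V}_p$ denotes the family of all subsets $A\subseteq\mathbb{P}$ such that $\sup A$ exists and equals $p$. A prime element of $\mathbb{P}$ is an element $q\in\mathbb{P}$ (required to be different from the maximum $1$ if $\mathbb{P}$ is bounded) such that for all $a,b\in\mathbb{P}$, $a\wedge b\leq q$ implies $a\leq q$ or $b\leq q$. $\mathbb{P}$ has enough prime elements if whenever $a,b\in\mathbb{P}$ satisfy $a\not\leq b$, there is a prime element $q$ with $b\leq q$ and $a\not\leq q$. For families $\mathcal{A},\mathcal{B}$ of subsets of $\mathbb{P}$: $\mathsf{S}_{\mathrm{fin}}(\mathcal{A},\mathcal{B})$ means that for every sequence $(A_n)_{n\in\omega}$ of members of $\mathcal{A}$ there are finite sets $F_n\subseteq A_n$ with $\bigcup_{n\in\omega}F_n\in\mathcal{B}$. The game $\mathsf{G}_{\mathrm{fin}}(\mathcal{A},\mathcal{B})$ has innings $n\in\omega$: in inning $n$ Player I plays some $A_n\in\mathcal{A}$ and Player II responds with a finite $F_n\subseteq A_n$; Player II wins the play if $\bigcup_{n\in\omega}F_n\in\mathcal{B}$, otherwise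 Player I wins. A strategy for Player I is a rule assigning Player I's move to each finite sequence of Player II's previous moves; it is winning if Player I wins every play following it. *)

theory Defs
  imports Main
begin

definition is_sup :: "'a::order set \<Rightarrow> 'a \<Rightarrow> bool" where
  "is_sup A p \<longleftrightarrow> (\<forall>a\<in>A. a \<le> p) \<and> (\<forall>u. (\<forall>a\<in>A. a \<le> u) \<longrightarrow> p \<le> u)"

definition V :: "'a::order \<Rightarrow> 'a set set" where
  "V p = {A. is_sup A p}"

definition prime_el :: "'a::lattice \<Rightarrow> bool" where
  "prime_el q \<longleftrightarrow> \<not> (\<forall>x. x \<le> q) \<and> (\<forall>a b. inf a b \<le> q \<longrightarrow> a \<le> q \<or> b \<le> q)"

definition enough_primes :: "'a::lattice itself \<Rightarrow> bool" where
  "enough_primes _ \<longleftrightarrow> (\<forall>a b::'a. \<not> a \<le> b \<longrightarrow> (\<exists>q. prime_el q \<and> b \<le> q \<and> \<not> a \<le> q))"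

definition S_fin :: "'a set set \<Rightarrow> 'a set set \<Rightarrow> bool" where
  "S_fin \<A> \<B> \<longleftrightarrow> (\<forall>An::nat \<Rightarrow> 'a set. (\<forall>n. An n \<in> \<A>) \<longrightarrow>
     (\<exists>F. (\<forall>n. finite (F n) \<and> F n \<subseteq> An n) \<and> (\<Union>n. F n) \<in> \<B>))"

text \<open>A strategy for Player I maps the (chronological) list of Player II's previous
  moves to Player I's next move.\<close>
definition winning_strategy_I :: "'a set set \<Rightarrow> 'a set set \<Rightarrow> ('a set list \<Rightarrow> 'a set) \<Rightarrow> bool" where
  "winning_strategy_I \<A> \<B> \<sigma> \<longleftrightarrow>
     (\<forall>F::nat \<Rightarrow> 'a set. (\<forall>n. finite (F n) \<and> F n \<subseteq> \<sigma> (map F [0..<n])) \<longrightarrow>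
        (\<forall>n. \<sigma> (map F [0..<n]) \<in> \<A>) \<and> (\<Union>n. F n) \<notin> \<B>)"

end

theory Submission
  imports Defs
begin

lemma fin_bound:
  fixes P :: "'b \<Rightarrow> nat \<Rightarrow> bool"
  assumes "finite S" "\<forall>x\<in>S. \<exists>k. P x k"
  shows "\<exists>K. \<forall>x\<in>S. \<exists>k\<le>K. P x k"
  using assms
proof (induction S rule: finite_induct)
  case empty then show ?case by auto
next
  case (insert x S)
  then obtain K where K: "\<forall>y\<in>S. \<exists>k\<le>K. P y k" by auto
  from insert obtain k where "P x k" by auto
  then show ?case using K
    by (metis insert_iff le_trans max.cobounded1 max.cobounded2)
qed

lemma Inf_fin_prime:
  fixes q :: "'a::lattice"
  assumes "finite X" "X \<noteq> {}" "prime_el q" "\<forall>x\<in>X. \<not> x \<le> q"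
  shows "\<not> Inf_fin X \<le> q"
  using assms(1,2,4)
proof (induction X rule: finite_ne_induct)
  case (singleton x) then show ?case by simp
next
  case (insert x X)
  then have "\<not> inf x (Inf_fin X) \<le> q" using assms(3) unfolding prime_el_def by auto
  then show ?case using insert by (simp add: Inf_fin.insert)
qed

locale wsetup =
  fixes p :: "'a::lattice" and \<sigma> :: "'a set list \<Rightarrow> 'a set"
  assumes ep: "enough_primes TYPE('a)" and sf: "S_fin (V p) (V p)"
    and ws: "winning_strategy_I (V p) (V p) \<sigma>"
begin

definition pt where "pt q \<longleftrightarrow> prime_el q \<and> \<not> p \<le> q"
definition sees where "sees q X \<longleftrightarrow> (\<exists>a\<in>X. \<not> a \<le> q)"

lemma sup_char: "is_sup A p \<longleftrightarrow> (\<forall>a\<in>A. a \<le> p) \<and> (\<forall>q. pt q \<longrightarrow> sees q A)"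
proof
  assume "is_sup A p"
  then show "(\<forall>a\<in>A. a \<le> p) \<and> (\<forall>q. pt q \<longrightarrow> sees q A)"
    unfolding is_sup_def pt_def sees_def by auto
next
  assume h: "(\<forall>a\<in>A. a \<le> p) \<and> (\<forall>q. pt q \<longrightarrow> sees q A)"
  have "p \<le> u" if u: "\<forall>a\<in>A. a \<le> u" for u
  proof (rule ccontr)
    assume "\<not> p \<le> u"
    then obtain q where q: "prime_el q" "u \<le> q" "\<not> p \<le> q"
      using ep unfolding enough_primes_def by blast
    then have "sees q A" using h unfolding pt_def by auto
    then show False using u q unfolding sees_def by (meson order_trans)
  qed
  then show "is_sup A p" using h unfolding is_sup_def by auto
qed

definition good :: "'a set \<Rightarrow> (nat \<Rightarrow> 'a set) \<Rightarrow> bool" where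
  "good A F \<longleftrightarrow> (\<forall>n. finite (F n) \<and> F n \<subseteq> A) \<and> (\<Union>n. F n) \<in> V p"
definition D where "D A = (if \<exists>F. good A F then SOME F. good A F else (\<lambda>_. {}))"
definition G where "G A k = (\<Union>j\<le>k. D A j)"

lemma D_prop: "finite (D A n) \<and> D A n \<subseteq> A"
proof (cases "\<exists>F. good A F")
  case True
  then have "good A (D A)" unfolding D_def by (simp add: someI_ex)
  then show ?thesis unfolding good_def by auto
qed (simp add: D_def)

lemma D_cov: assumes "A \<in> V p" shows "(\<Union>n. D A n) \<in> V p"
proof -
  have "\<exists>F. good A F" using sf assms unfolding S_fin_def good_def
    by (erule_tac x="\<lambda>_. A" in allE) auto
  then have "good A (D A)" unfolding D_def by (simp add: someI_ex)
  then show ?thesis unfolding good_def by auto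
qed

lemma G_fin: "finite (G A k)" unfolding G_def using D_prop by auto
lemma G_sub: "G A k \<subseteq> A" unfolding G_def using D_prop by auto
lemma G_mono: "k \<le> k' \<Longrightarrow> G A k \<subseteq> G A k'" unfolding G_def by (auto intro: le_trans)

primrec L :: "(nat \<Rightarrow> nat) \<Rightarrow> nat \<Rightarrow> 'a set list" where
  "L t 0 = []" | "L t (Suc n) = L t n @ [G (\<sigma> (L t n)) (t n)]"

definition pl where "pl t n = G (\<sigma> (L t n)) (t n)"

lemma L_cong: "(\<forall>i<n. t i = t' i) \<Longrightarrow> L t n = L t' n"
  by (induction n) auto

lemma L_map: "L t n = map (pl t) [0..<n]"
  by (induction n) (auto simp: pl_def)

lemma legal: "\<sigma> (L t n) \<in> V p"
proof -
  have "\<forall>n. finite (pl t n) \<and> pl t n \<subseteq> \<sigma> (map (pl t) [0..<n])"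
    using G_fin G_sub by (simp add: pl_def L_map[symmetric])
  then show ?thesis using ws unfolding winning_strategy_I_def L_map by blast
qed

lemma not_win: "(\<Union>n. pl t n) \<notin> V p"
proof -
  have "\<forall>n. finite (pl t n) \<and> pl t n \<subseteq> \<sigma> (map (pl t) [0..<n])"
    using G_fin G_sub by (simp add: pl_def L_map[symmetric])
  then show ?thesis using ws unfolding winning_strategy_I_def by blast
qed

definition U :: "nat list \<Rightarrow> nat \<Rightarrow> 'a set" where
  "U s k = G (\<sigma> (L (nth s) (length s))) k"

lemma U_le: "a \<in> U s k \<Longrightarrow> a \<le> p"
  using legal[of "nth s" "length s"] G_sub unfolding U_def V_def is_sup_def by blast

lemma U_mono: "k \<le> k' \<Longrightarrow> U s k \<subseteq> U s k'"
  unfolding U_def by (rule G_mono)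

lemma sees_mono: "sees q X \<Longrightarrow> X \<subseteq> Y \<Longrightarrow> sees q Y"
  unfolding sees_def by auto

lemma U_sees: assumes "pt q" shows "\<exists>k. sees q (U s k)"
proof -
  let ?A = "\<sigma> (L (nth s) (length s))"
  have "(\<Union>n. D ?A n) \<in> V p" using D_cov legal by blast
  then have "sees q (\<Union>n. D ?A n)" using assms sup_char unfolding V_def by auto
  then obtain a j where "a \<in> D ?A j" "\<not> a \<le> q" unfolding sees_def by auto
  then have "sees q (U s j)" unfolding sees_def U_def G_def by auto
  then show ?thesis by blast
qed

lemma U_map: "U (map t [0..<n]) k = G (\<sigma> (L t n)) k"
proof -
  have "L (nth (map t [0..<n])) n = L t n" by (rule L_cong) auto
  then show ?thesis unfolding U_def by simp
qed

definition Tq where "Tq q s \<longleftrightarrow> (\<forall>j<length s. \<not> sees q (U (take j s) (s!j)))"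

lemma Tq_snoc: "Tq q (s @ [a]) \<longleftrightarrow> Tq q s \<and> \<not> sees q (U s a)"
  unfolding Tq_def
  by (auto simp: nth_append less_Suc_eq)

lemma Tq_bound:
  assumes "pt q"
  shows "\<exists>k. \<forall>s. Tq q s \<and> length s \<le> n \<longrightarrow> set s \<subseteq> {..<k} \<and> sees q (U s k)"
proof (induction n)
  case 0
  obtain k where "sees q (U [] k)" using U_sees assms by blast
  then show ?case by auto
next
  case (Suc n)
  then obtain k where k: "\<forall>s. Tq q s \<and> length s \<le> n \<longrightarrow> set s \<subseteq> {..<k} \<and> sees q (U s k)"
    by blast
  let ?S = "{s. set s \<subseteq> {..<k} \<and> length s \<le> Suc n}"
  have "finite ?S" by (rule finite_lists_length_le) simp
  then obtain K where K: "\<forall>s\<in>?S. \<exists>k'\<le>K. sees q (U s k')"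
    using fin_bound[of ?S "\<lambda>s k. sees q (U s k)"] U_sees assms by blast
  have K': "\<forall>s\<in>?S. sees q (U s (max k K))"
    using K U_mono sees_mono by (meson le_trans max.cobounded2)
  show ?case
  proof (intro exI allI impI)
    fix s assume s: "Tq q s \<and> length s \<le> Suc n"
    show "set s \<subseteq> {..<max k K} \<and> sees q (U s (max k K))"
    proof (cases "length s \<le> n")
      case True
      then have "set s \<subseteq> {..<k} \<and> sees q (U s k)" using k s by blast
      then show ?thesis using U_mono[of k "max k K" s] sees_mono by auto
    next
      case False
      then have ne: "s \<noteq> []" by auto
      then obtain s0 a where s0: "s = s0 @ [a]" by (metis rev_exhaust)
      then have "Tq q s0" "\<not> sees q (U s0 a)" using s Tq_snoc by auto
      moreover have "length s0 \<le> n" using s s0 by auto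
      ultimately have h: "set s0 \<subseteq> {..<k}" "sees q (U s0 k)" using k by auto
      have "a < k"
      proof (rule ccontr)
        assume "\<not> a < k"
        then have "U s0 k \<subseteq> U s0 a" using U_mono by auto
        then show False using h \<open>\<not> sees q (U s0 a)\<close> sees_mono by blast
      qed
      then have "s \<in> ?S" using h s s0 by auto
      then show ?thesis using K' \<open>s \<in> ?S\<close> s0 h \<open>a < k\<close> by auto
    qed
  qed
qed

definition N :: "nat \<Rightarrow> nat \<Rightarrow> nat list set" where "N n k = {s. set s \<subseteq> {..<k} \<and> length s \<le> n}"
definition Opt where "Opt k s = U s k \<union> (\<Union>j<length s. U (take j s) (s!j))"
definition Ck where "Ck n k = {Inf_fin (a ` N n k) | a. \<forall>s\<in>N n k. a s \<in> Opt k s}"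
definition C where "C n = (\<Union>k. Ck n k)"

lemma N_fin: "finite (N n k)" unfolding N_def by (rule finite_lists_length_le) simp
lemma N_nil: "[] \<in> N n k" unfolding N_def by simp

lemma Opt_le: "a \<in> Opt k s \<Longrightarrow> a \<le> p" unfolding Opt_def using U_le by blast

lemma C_V: "C n \<in> V p"
  unfolding V_def mem_Collect_eq sup_char
proof (intro conjI allI impI ballI)
  fix c assume "c \<in> C n"
  then obtain k a where c: "c = Inf_fin (a ` N n k)" "\<forall>s\<in>N n k. a s \<in> Opt k s"
    unfolding C_def Ck_def by blast
  have "c \<le> a []" unfolding c(1) using N_fin N_nil by (simp add: Inf_fin.coboundedI)
  also have "a [] \<le> p" using c(2) N_nil Opt_le by blast
  finally show "c \<le> p" .
next
  fix q assume q: "pt q"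
  obtain k where k: "\<forall>s. Tq q s \<and> length s \<le> n \<longrightarrow> set s \<subseteq> {..<k} \<and> sees q (U s k)"
    using Tq_bound[OF q] by blast
  have "sees q (Opt k s)" if "s \<in> N n k" for s
  proof (cases "Tq q s")
    case True
    then have "sees q (U s k)" using k that unfolding N_def by auto
    then show ?thesis unfolding Opt_def using sees_mono by blast
  next
    case False
    then obtain j where "j < length s" "sees q (U (take j s) (s!j))" unfolding Tq_def by auto
    then show ?thesis unfolding Opt_def sees_def by blast
  qed
  then have "\<forall>s\<in>N n k. \<exists>b. b \<in> Opt k s \<and> \<not> b \<le> q" unfolding sees_def by blast
  then obtain a where a: "\<forall>s\<in>N n k. a s \<in> Opt k s \<and> \<not> a s \<le> q" by metis
  have ne: "a ` N n k \<noteq> {}" using N_nil by blast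
  have "\<not> Inf_fin (a ` N n k) \<le> q"
    by (rule Inf_fin_prime[OF finite_imageI[OF N_fin] ne]) (use a q in \<open>auto simp: pt_def\<close>)
  moreover have "Inf_fin (a ` N n k) \<in> C n" unfolding C_def Ck_def using a by blast
  ultimately show "sees q (C n)" unfolding sees_def by blast
qed

lemma catch:
  assumes "c \<in> Ck n k" "pt q" "\<not> c \<le> q"
  shows "Tq q s \<and> length s \<le> Suc n \<longrightarrow> set s \<subseteq> {..<k}"
proof (induction s rule: rev_induct)
  case Nil then show ?case by simp
next
  case (snoc x s)
  obtain a where c: "c = Inf_fin (a ` N n k)" "\<forall>s\<in>N n k. a s \<in> Opt k s"
    using assms(1) unfolding Ck_def by blast
  show ?case
  proof
    assume h: "Tq q (s @ [x]) \<and> length (s @ [x]) \<le> Suc n"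
    then have T: "Tq q s" "\<not> sees q (U s x)" using Tq_snoc by auto
    then have ss: "set s \<subseteq> {..<k}" using snoc h by auto
    then have sN: "s \<in> N n k" using h unfolding N_def by auto
    then have "c \<le> a s" unfolding c(1) using N_fin by (simp add: Inf_fin.coboundedI)
    then have "\<not> a s \<le> q" using assms(3) order_trans by blast
    then have "sees q (Opt k s)" using c(2) sN unfolding sees_def by blast
    then have "sees q (U s k)" using T(1) unfolding Opt_def Tq_def sees_def by blast
    have "x < k"
    proof (rule ccontr)
      assume "\<not> x < k"
      then have "U s k \<subseteq> U s x" using U_mono by auto
      then show False using \<open>sees q (U s k)\<close> T(2) sees_mono by blast
    qed
    then show "set (s @ [x]) \<subseteq> {..<k}" using ss by auto
  qed
qed

lemma contradiction: False
proof -
  have CV: "\<forall>n. C n \<in> V p" using C_V by (rule allI)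
  have "(\<forall>n. C n \<in> V p) \<longrightarrow> (\<exists>F. (\<forall>n. finite (F n) \<and> F n \<subseteq> C n) \<and> (\<Union>n. F n) \<in> V p)"
    using sf unfolding S_fin_def by (rule spec)
  then have "\<exists>F. (\<forall>n. finite (F n) \<and> F n \<subseteq> C n) \<and> (\<Union>n. F n) \<in> V p"
    using CV by (rule mp)
  then obtain F where F: "\<forall>n. finite (F n) \<and> F n \<subseteq> C n" "(\<Union>n. F n) \<in> V p"
    by (elim exE conjE)
  have "\<exists>K. \<forall>c\<in>F n. \<exists>k\<le>K. c \<in> Ck n k" for n
  proof (rule fin_bound)
    show "finite (F n)" using F(1) by blast
    show "\<forall>c\<in>F n. \<exists>k. c \<in> Ck n k" using F(1) unfolding C_def by blast
  qed
  then have "\<forall>n. \<exists>K. \<forall>c\<in>F n. \<exists>k\<le>K. c \<in> Ck n k" by blast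
  from choice[OF this] obtain K where K: "\<forall>n. \<forall>c\<in>F n. \<exists>k\<le>K n. c \<in> Ck n k" by blast
  define t where "t = K"
  have "(\<Union>n. pl t n) \<in> V p"
    unfolding V_def mem_Collect_eq sup_char
  proof (intro conjI allI impI ballI)
    fix a assume "a \<in> (\<Union>n. pl t n)"
    then obtain n where "a \<in> pl t n" by auto
    then have "a \<in> U (map t [0..<n]) (t n)" by (simp add: U_map pl_def)
    then show "a \<le> p" by (rule U_le)
  next
    fix q assume q: "pt q"
    have "is_sup (\<Union>n. F n) p" using F(2) unfolding V_def by simp
    then have "sees q (\<Union>n. F n)" using q unfolding sup_char by blast
    then obtain n c where c: "c \<in> F n" "\<not> c \<le> q" unfolding sees_def by auto
    then obtain k where k: "k \<le> K n" "c \<in> Ck n k" using K by blast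
    show "sees q (\<Union>n. pl t n)"
    proof (rule ccontr)
      assume ns: "\<not> sees q (\<Union>n. pl t n)"
      let ?s = "map t [0..<Suc n]"
      have "Tq q ?s" unfolding Tq_def
      proof (intro allI impI)
        fix j assume "j < length ?s"
        then have "take j ?s = map t [0..<j]" "?s ! j = t j"
          by (simp_all add: take_map del: upt_Suc)
        then have "U (take j ?s) (?s!j) = pl t j" by (simp add: U_map pl_def)
        then show "\<not> sees q (U (take j ?s) (?s!j))" using ns unfolding sees_def by auto
      qed
      moreover have "length ?s \<le> Suc n" by simp
      ultimately have "set ?s \<subseteq> {..<k}" using catch[OF k(2) q c(2), of ?s] by blast
      moreover have "t n \<in> set ?s" by (simp del: upt_Suc)
      ultimately have "t n < k" by blast
      then show False using k(1) unfolding t_def by auto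
    qed
  qed
  then show False using not_win by blast
qed

end

lemma not_S_fin_ws:
  fixes A B :: "'b set set"
  assumes "\<not> S_fin A B" shows "\<exists>\<sigma>. winning_strategy_I A B \<sigma>"
proof -
  have "\<exists>An::nat \<Rightarrow> 'b set. \<not> ((\<forall>n. An n \<in> A) \<longrightarrow>
     (\<exists>F. (\<forall>n. finite (F n) \<and> F n \<subseteq> An n) \<and> (\<Union>n. F n) \<in> B))"
    using assms unfolding S_fin_def by (simp only: not_all)
  then obtain An :: "nat \<Rightarrow> 'b set" where h2: "\<not> ((\<forall>n. An n \<in> A) \<longrightarrow>
     (\<exists>F. (\<forall>n. finite (F n) \<and> F n \<subseteq> An n) \<and> (\<Union>n. F n) \<in> B))"
    by (rule exE)
  have An: "\<forall>n. An n \<in> A"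
    "\<forall>F. (\<forall>n. finite (F n) \<and> F n \<subseteq> An n) \<longrightarrow> (\<Union>n. F n) \<notin> B"
  proof -
    have h3: "(\<forall>n. An n \<in> A) \<and> \<not> (\<exists>F. (\<forall>n. finite (F n) \<and> F n \<subseteq> An n) \<and> (\<Union>n. F n) \<in> B)"
      using h2 by blast
    then show "\<forall>n. An n \<in> A" by (rule conjunct1)
    from h3 have "\<not> (\<exists>F. (\<forall>n. finite (F n) \<and> F n \<subseteq> An n) \<and> (\<Union>n. F n) \<in> B)" by (rule conjunct2)
    then show "\<forall>F. (\<forall>n. finite (F n) \<and> F n \<subseteq> An n) \<longrightarrow> (\<Union>n. F n) \<notin> B"
      by blast
  qed
  have "winning_strategy_I A B (\<lambda>xs. An (length xs))"
    unfolding winning_strategy_I_def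
  proof (intro allI impI conjI)
    fix F and n :: nat
    assume h: "\<forall>n. finite (F n) \<and> F n \<subseteq> An (length (map F [0..<n]))"
    show "An (length (map F [0..<n])) \<in> A" using An(1) by (simp only: length_map length_upt diff_zero)
    have "\<forall>n. finite (F n) \<and> F n \<subseteq> An n" using h unfolding length_map length_upt diff_zero .
    then show "(\<Union>n. F n) \<notin> B" by (rule mp[OF spec[OF An(2)]])
  qed
  then show ?thesis by (rule exI[where x="\<lambda>xs. An (length xs)"])
qed

theorem theorem1p1:
  fixes p :: "'a::lattice"
  assumes "enough_primes TYPE('a)"
  shows "S_fin (V p) (V p) \<longleftrightarrow> \<not> (\<exists>\<sigma>. winning_strategy_I (V p) (V p) \<sigma>)"
proof
  assume "S_fin (V p) (V p)"
  show "\<not> (\<exists>\<sigma>. winning_strategy_I (V p) (V p) \<sigma>)"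
  proof
    assume "\<exists>\<sigma>. winning_strategy_I (V p) (V p) \<sigma>"
    then obtain \<sigma> where "winning_strategy_I (V p) (V p) \<sigma>" by blast
    then have "wsetup p \<sigma>" using assms \<open>S_fin (V p) (V p)\<close> unfolding wsetup_def by (intro conjI)
    then show False by (rule wsetup.contradiction)
  qed
next
  assume nw: "\<not> (\<exists>\<sigma>. winning_strategy_I (V p) (V p) \<sigma>)"
  show "S_fin (V p) (V p)"
    using not_S_fin_ws[of "V p" "V p"] nw by blast
qed

end
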